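(* Let $A$ be an evolution algebra with natural basis $B=\{e_i:i\in\Lambda\}$ and structure matrix $(\omega_{ki})$. A non-zero proper subset $M\subseteq A$ is a modular ideal of $A$ if and only if $M=\mathrm{lin}\{e_j:j\in\Lambda_0\}$ for some non-empty proper subset $\Lambda_0\subseteq\Lambda$ satisfying: (i) $\Lambda\setminus\Lambda_0$ is finite and $\Lambda\setminus\Lambda_0\subseteq\Lambda\setminus D(\Lambda_0)$; (ii) for every $i\in\Lambda\setminus\Lambda_0$, $i\in D(i)$ and $D(i)\setminus\{i\}\subseteq\Lambda_0$. In that case $u=\sum_{i\in\Lambda\setminus\Lambda_0}\frac{1}{\omega_{ii}}e_i$ is a modular unit for $M$.
   Context: An evolution algebra is an algebra $A$ over $\mathbb{K}\in\{\mathbb{R},\mathbb{C}\}$ with a basis $\{e_i:i\in\Lambda\}$ (natural basis) such that $e_ie_j=0$ for $i\neq j$; write $e_i^2=\sum_k\omega_{ki}e_k$. An ideal $M$ is modular if some $u\in A$ (modular unit) satisfies $a-au\in M$ for all $a\in A$. Descendents: $D^1(i)=\{j:\omega_{ji}\neq0\}$, $D^n(i)=\bigcup_{j\in D^{n-1}(i)}D^1(j)$, $D(i)=\bigcup_{n\ge1}D^n(i)$, and for nonempty $\Lambda_0\subseteq\Lambda$, $D(\Lambda_0)=\bigcup_{i\in\Lambda_0}D(i)$. *)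

theory Defs
  imports Complex_Main "HOL-Library.Function_Algebras"
begin

text \<open>
  Evolution algebra over a field 'k (intended: real or complex, class real_normed_field)
  with natural basis indexed by the type 'i (so Lambda = UNIV).
  Elements of A are finitely supported coordinate functions 'i \<Rightarrow> 'k.
  The structure matrix is om :: 'i \<Rightarrow> 'i \<Rightarrow> 'k, where e_i^2 = sum_k om k i e_k.
\<close>

definition evo_carrier :: "('i \<Rightarrow> 'k::field) set" where
  "evo_carrier = {a. finite {i. a i \<noteq> 0}}"

definition basis_vec :: "'i \<Rightarrow> 'i \<Rightarrow> 'k::field" where
  "basis_vec j = (\<lambda>i. if i = j then 1 else 0)"

definition smul :: "'k::field \<Rightarrow> ('i \<Rightarrow> 'k) \<Rightarrow> ('i \<Rightarrow> 'k)" where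
  "smul c a = (\<lambda>i. c * a i)"

text \<open>Bilinear extension of e_i e_j = 0 (i \<noteq> j), e_i e_i = sum_k om k i e_k.\<close>
definition evo_mult :: "('i \<Rightarrow> 'i \<Rightarrow> 'k::field) \<Rightarrow> ('i \<Rightarrow> 'k) \<Rightarrow> ('i \<Rightarrow> 'k) \<Rightarrow> ('i \<Rightarrow> 'k)" where
  "evo_mult om a b = (\<lambda>k. \<Sum>i\<in>{i. a i \<noteq> 0}. a i * b i * om k i)"

definition evo_ideal :: "('i \<Rightarrow> 'i \<Rightarrow> 'k::field) \<Rightarrow> ('i \<Rightarrow> 'k) set \<Rightarrow> bool" where
  "evo_ideal om M \<longleftrightarrow> M \<subseteq> evo_carrier \<and> 0 \<in> M
     \<and> (\<forall>x\<in>M. \<forall>y\<in>M. x + y \<in> M)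
     \<and> (\<forall>c. \<forall>x\<in>M. smul c x \<in> M)
     \<and> (\<forall>a\<in>evo_carrier. \<forall>m\<in>M. evo_mult om a m \<in> M \<and> evo_mult om m a \<in> M)"

definition modular_unit :: "('i \<Rightarrow> 'i \<Rightarrow> 'k::field) \<Rightarrow> ('i \<Rightarrow> 'k) set \<Rightarrow> ('i \<Rightarrow> 'k) \<Rightarrow> bool" where
  "modular_unit om M u \<longleftrightarrow> u \<in> evo_carrier \<and> (\<forall>a\<in>evo_carrier. a - evo_mult om a u \<in> M)"

definition modular_ideal :: "('i \<Rightarrow> 'i \<Rightarrow> 'k::field) \<Rightarrow> ('i \<Rightarrow> 'k) set \<Rightarrow> bool" where
  "modular_ideal om M \<longleftrightarrow> evo_ideal om M \<and> (\<exists>u. modular_unit om M u)"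

definition lin_basis :: "'i set \<Rightarrow> ('i \<Rightarrow> 'k::field) set" where
  "lin_basis L0 = {\<Sum>j\<in>F. smul (c j) (basis_vec j) | F c. finite F \<and> F \<subseteq> L0}"

definition D1 :: "('i \<Rightarrow> 'i \<Rightarrow> 'k::field) \<Rightarrow> 'i \<Rightarrow> 'i set" where
  "D1 om i = {j. om j i \<noteq> 0}"

fun Dn :: "('i \<Rightarrow> 'i \<Rightarrow> 'k::field) \<Rightarrow> nat \<Rightarrow> 'i \<Rightarrow> 'i set" where
  "Dn om 0 i = {}"
| "Dn om (Suc 0) i = D1 om i"
| "Dn om (Suc (Suc n)) i = (\<Union>j\<in>Dn om (Suc n) i. D1 om j)"

definition Desc :: "('i \<Rightarrow> 'i \<Rightarrow> 'k::field) \<Rightarrow> 'i \<Rightarrow> 'i set" where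
  "Desc om i = (\<Union>n\<in>{1..}. Dn om n i)"

definition Desc_set :: "('i \<Rightarrow> 'i \<Rightarrow> 'k::field) \<Rightarrow> 'i set \<Rightarrow> 'i set" where
  "Desc_set om L0 = (\<Union>i\<in>L0. Desc om i)"

end

theory Submission imports Defs begin

lemma sum_fun_app: "(\<Sum>j\<in>F. f j) x = (\<Sum>j\<in>F. f j x)"
  by (induction F rule: infinite_finite_induct) auto

lemma lin_basis_char:
  "lin_basis L0 = {a::'i\<Rightarrow>'k::field. finite {i. a i \<noteq> 0} \<and> (\<forall>i. i \<notin> L0 \<longrightarrow> a i = 0)}"
proof (intro set_eqI iffI)
  fix a :: "'i \<Rightarrow> 'k" assume "a \<in> lin_basis L0"
  then obtain F c where a: "a = (\<Sum>j\<in>F. smul (c j) (basis_vec j))" and F: "finite F" "F \<subseteq> L0"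
    unfolding lin_basis_def by blast
  have ai: "a i = (if i \<in> F then c i else 0)" for i
    using F(1) by (simp add: a sum_fun_app smul_def basis_vec_def if_distrib cong: if_cong)
  have "{i. a i \<noteq> 0} \<subseteq> F" using ai by auto
  then show "a \<in> {a. finite {i. a i \<noteq> 0} \<and> (\<forall>i. i \<notin> L0 \<longrightarrow> a i = 0)}"
    using F ai finite_subset by auto
next
  fix a :: "'i \<Rightarrow> 'k" assume "a \<in> {a. finite {i. a i \<noteq> 0} \<and> (\<forall>i. i \<notin> L0 \<longrightarrow> a i = 0)}"
  then have f: "finite {i. a i \<noteq> 0}" and z: "\<And>i. i \<notin> L0 \<Longrightarrow> a i = 0" by auto
  have "a = (\<Sum>j\<in>{i. a i \<noteq> 0}. smul (a j) (basis_vec j))"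
  proof
    fix i
    show "a i = (\<Sum>j\<in>{i. a i \<noteq> 0}. smul (a j) (basis_vec j)) i"
      using f by (simp add: sum_fun_app smul_def basis_vec_def if_distrib cong: if_cong)
  qed
  moreover have "{i. a i \<noteq> 0} \<subseteq> L0" using z by auto
  ultimately show "a \<in> lin_basis L0" unfolding lin_basis_def using f by blast
qed

lemma evo_mult_S:
  assumes "finite S" "{i. a i \<noteq> 0} \<subseteq> S"
  shows "evo_mult om a b k = (\<Sum>i\<in>S. a i * b i * om k i)"
  unfolding evo_mult_def using assms by (intro sum.mono_neutral_left) auto

lemma evo_mult_basis_left:
  "evo_mult om (basis_vec j) b = (\<lambda>k. b j * om k j)"
proof
  fix k
  have "evo_mult om (basis_vec j) b k = (\<Sum>i\<in>{j}. basis_vec j i * b i * om k i)"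
    by (rule evo_mult_S) (auto simp: basis_vec_def)
  then show "evo_mult om (basis_vec j) b k = b j * om k j" by (simp add: basis_vec_def)
qed

lemma evo_mult_basis_right:
  assumes "finite {i. m i \<noteq> 0}"
  shows "evo_mult om m (basis_vec j) = (\<lambda>k. m j * om k j)"
proof
  fix k
  have "evo_mult om m (basis_vec j) k = (\<Sum>i\<in>insert j {i. m i \<noteq> 0}. m i * basis_vec j i * om k i)"
    by (rule evo_mult_S) (use assms in auto)
  also have "\<dots> = m j * om k j"
    using assms by (simp add: sum.insert_remove basis_vec_def)
  finally show "evo_mult om m (basis_vec j) k = m j * om k j" .
qed

lemma Desc_sub:
  assumes "D1 om i \<subseteq> P" "\<forall>j\<in>P. D1 om j \<subseteq> P"
  shows "Desc om i \<subseteq> P"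
proof -
  have "Dn om (Suc n) i \<subseteq> P" for n
  proof (induction n)
    case 0 then show ?case using assms(1) by simp
  next
    case (Suc n) then show ?case using assms(2) by auto
  qed
  show ?thesis unfolding Desc_def
  proof (rule UN_least)
    fix n :: nat assume "n \<in> {1..}"
    then obtain m where "n = Suc m" by (cases n) auto
    then show "Dn om n i \<subseteq> P" using \<open>\<And>n. Dn om (Suc n) i \<subseteq> P\<close> by simp
  qed
qed

lemma D1_Desc: "D1 om i \<subseteq> Desc om i"
proof -
  have "Dn om 1 i \<subseteq> Desc om i" unfolding Desc_def by (rule UN_upper) simp
  then show ?thesis by (simp only: One_nat_def Dn.simps)
qed

lemma mult_carrier:
  assumes evo: "\<forall>i. finite {k. om k i \<noteq> 0}" and a: "a \<in> evo_carrier"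
  shows "evo_mult om a b \<in> evo_carrier"
proof -
  have f: "finite {i. a i \<noteq> 0}" using a by (simp add: evo_carrier_def)
  have "{k. evo_mult om a b k \<noteq> 0} \<subseteq> (\<Union>i\<in>{i. a i \<noteq> 0}. {k. om k i \<noteq> 0})"
  proof
    fix k assume "k \<in> {k. evo_mult om a b k \<noteq> 0}"
    then have "(\<Sum>i\<in>{i. a i \<noteq> 0}. a i * b i * om k i) \<noteq> 0" by (simp add: evo_mult_def)
    then obtain i where "a i \<noteq> 0" "a i * b i * om k i \<noteq> 0" by (rule sum.not_neutral_contains_not_neutral) auto
    then show "k \<in> (\<Union>i\<in>{i. a i \<noteq> 0}. {k. om k i \<noteq> 0})" by auto
  qed
  moreover have "finite (\<Union>i\<in>{i. a i \<noteq> 0}. {k. om k i \<noteq> 0})" using f evo by auto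
  ultimately show ?thesis unfolding evo_carrier_def using finite_subset by blast
qed

lemma diff_carrier: "a \<in> evo_carrier \<Longrightarrow> b \<in> evo_carrier \<Longrightarrow> a - b \<in> evo_carrier"
  unfolding evo_carrier_def
  by (rule CollectI, rule finite_subset[of _ "{i. a i \<noteq> 0} \<union> {i. b i \<noteq> 0}"]) auto

lemma LB_mem: "x \<in> lin_basis L0 \<longleftrightarrow> x \<in> evo_carrier \<and> (\<forall>i. i \<notin> L0 \<longrightarrow> x i = 0)"
  by (simp add: lin_basis_char evo_carrier_def)

lemma om_diag:
  assumes C1: "UNIV - L0 \<subseteq> UNIV - Desc_set om L0"
    and C2: "\<forall>i\<in>UNIV - L0. i \<in> Desc om i \<and> Desc om i - {i} \<subseteq> L0"
    and k: "k \<notin> L0"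
  shows "om k k \<noteq> 0"
proof
  assume z: "om k k = 0"
  have L0cl: "\<forall>j\<in>L0. D1 om j \<subseteq> L0"
  proof (intro ballI subsetI)
    fix j x assume "j \<in> L0" "x \<in> D1 om j"
    then have "x \<in> Desc om j" using D1_Desc[of om j] by blast
    then have "x \<in> Desc_set om L0" unfolding Desc_set_def using \<open>j \<in> L0\<close> by blast
    then show "x \<in> L0" using C1 by blast
  qed
  have "D1 om k \<subseteq> L0"
  proof
    fix x assume x: "x \<in> D1 om k"
    then have "x \<noteq> k" using z by (auto simp: D1_def)
    have "x \<in> Desc om k" using x D1_Desc[of om k] by blast
    moreover have "Desc om k - {k} \<subseteq> L0" using C2 k by blast
    ultimately show "x \<in> L0" using \<open>x \<noteq> k\<close> by blast
  qed
  then have "Desc om k \<subseteq> L0" using Desc_sub L0cl by metis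
  moreover have "k \<in> Desc om k" using C2 k by blast
  ultimately show False using k by blast
qed

lemma suff:
  fixes om :: "'i \<Rightarrow> 'i \<Rightarrow> 'k::field"
  assumes evo: "\<forall>i. finite {k. om k i \<noteq> 0}"
    and fin: "finite (UNIV - L0)"
    and C1: "UNIV - L0 \<subseteq> UNIV - Desc_set om L0"
    and C2: "\<forall>i\<in>UNIV - L0. i \<in> Desc om i \<and> Desc om i - {i} \<subseteq> L0"
  shows "evo_ideal om (lin_basis L0)
     \<and> modular_unit om (lin_basis L0) (\<Sum>i\<in>UNIV - L0. smul (1 / om i i) (basis_vec i))"
proof -
  define C where "C = UNIV - L0"
  have zero_om: "om k j = 0" if "j \<in> L0" "k \<notin> L0" for j k
  proof (rule ccontr)
    assume "om k j \<noteq> 0"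
    then have "k \<in> D1 om j" by (simp add: D1_def)
    then have "k \<in> Desc om j" using D1_Desc[of om j] by blast
    then have "k \<in> Desc_set om L0" unfolding Desc_set_def using that(1) by blast
    then show False using C1 that(2) by blast
  qed
  have ideal: "evo_ideal om (lin_basis L0)"
    unfolding evo_ideal_def
  proof (intro conjI ballI allI)
    show "lin_basis L0 \<subseteq> evo_carrier" by (auto simp: LB_mem)
    show "0 \<in> lin_basis L0" by (simp add: LB_mem evo_carrier_def)
  next
    fix x y :: "'i \<Rightarrow> 'k" assume "x \<in> lin_basis L0" "y \<in> lin_basis L0"
    then show "x + y \<in> lin_basis L0" unfolding LB_mem evo_carrier_def
      by (auto intro: finite_subset[of _ "{i. x i \<noteq> 0} \<union> {i. y i \<noteq> 0}"])
  next
    fix c and x :: "'i \<Rightarrow> 'k" assume "x \<in> lin_basis L0"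
    then show "smul c x \<in> lin_basis L0" unfolding LB_mem evo_carrier_def smul_def
      by (auto intro: finite_subset[of _ "{i. x i \<noteq> 0}"])
  next
    fix a m :: "'i \<Rightarrow> 'k" assume a: "a \<in> evo_carrier" and m: "m \<in> lin_basis L0"
    have fa: "finite {i. a i \<noteq> 0}" using a by (simp add: evo_carrier_def)
    have mc: "m \<in> evo_carrier" and mz: "\<And>i. i \<notin> L0 \<Longrightarrow> m i = 0" using m by (auto simp: LB_mem)
    have fm: "finite {i. m i \<noteq> 0}" using mc by (simp add: evo_carrier_def)
    show "evo_mult om a m \<in> lin_basis L0"
      unfolding LB_mem
    proof (intro conjI allI impI)
      show "evo_mult om a m \<in> evo_carrier" by (rule mult_carrier[OF evo a])
      fix k assume k: "k \<notin> L0"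
      have "evo_mult om a m k = (\<Sum>i\<in>{i. a i \<noteq> 0}. a i * m i * om k i)"
        by (rule evo_mult_S[OF fa]) simp
      also have "\<dots> = 0"
        by (rule sum.neutral) (use zero_om[OF _ k] mz in auto)
      finally show "evo_mult om a m k = 0" .
    qed
    show "evo_mult om m a \<in> lin_basis L0"
      unfolding LB_mem
    proof (intro conjI allI impI)
      show "evo_mult om m a \<in> evo_carrier" by (rule mult_carrier[OF evo mc])
      fix k assume k: "k \<notin> L0"
      have "evo_mult om m a k = (\<Sum>i\<in>{i. m i \<noteq> 0}. m i * a i * om k i)"
        by (rule evo_mult_S[OF fm]) simp
      also have "\<dots> = 0"
        by (rule sum.neutral) (use zero_om[OF _ k] mz in auto)
      finally show "evo_mult om m a k = 0" .
    qed
  qed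
  define u where "u = (\<Sum>i\<in>UNIV - L0. smul (1 / om i i) (basis_vec i))"
  have ui: "u x = (if x \<in> C then 1 / om x x else 0)" for x
    using fin unfolding u_def C_def
    by (simp add: sum_fun_app smul_def basis_vec_def if_distrib cong: if_cong)
  have uc: "u \<in> evo_carrier"
    unfolding evo_carrier_def using fin ui C_def by (auto intro: finite_subset[of _ C])
  have "modular_unit om (lin_basis L0) u"
    unfolding modular_unit_def
  proof (intro conjI ballI uc)
    fix a :: "'i \<Rightarrow> 'k" assume a: "a \<in> evo_carrier"
    have fa: "finite {i. a i \<noteq> 0}" using a by (simp add: evo_carrier_def)
    show "a - evo_mult om a u \<in> lin_basis L0"
      unfolding LB_mem
    proof (intro conjI allI impI)
      show "a - evo_mult om a u \<in> evo_carrier" by (rule diff_carrier[OF a mult_carrier[OF evo a]])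
      fix k assume k: "k \<notin> L0"
      have kk: "om k k \<noteq> 0" by (rule om_diag[OF C1 C2 k])
      have fS: "finite ({i. a i \<noteq> 0} \<union> C)" using fa fin C_def by simp
      have "evo_mult om a u k = (\<Sum>i\<in>{i. a i \<noteq> 0} \<union> C. a i * u i * om k i)"
        by (rule evo_mult_S[OF fS]) auto
      also have "\<dots> = (\<Sum>i\<in>{k}. a i * u i * om k i)"
      proof (rule sum.mono_neutral_right[OF fS])
        show "{k} \<subseteq> {i. a i \<noteq> 0} \<union> C" using k C_def by auto
        show "\<forall>i\<in>{i. a i \<noteq> 0} \<union> C - {k}. a i * u i * om k i = 0"
        proof
          fix i assume i: "i \<in> {i. a i \<noteq> 0} \<union> C - {k}"
          show "a i * u i * om k i = 0"
          proof (cases "i \<in> C")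
            case False then show ?thesis by (simp add: ui)
          next
            case True
            have "om k i = 0"
            proof (rule ccontr)
              assume "om k i \<noteq> 0"
              then have "k \<in> D1 om i" by (simp add: D1_def)
              then have "k \<in> Desc om i" using D1_Desc[of om i] by blast
              then have "k \<in> Desc om i - {i}" using i by blast
              moreover have "Desc om i - {i} \<subseteq> L0" using C2 True C_def by blast
              ultimately show False using k by blast
            qed
            then show ?thesis by simp
          qed
        qed
      qed
      also have "\<dots> = a k" using kk k by (simp add: ui C_def)
      finally show "(a - evo_mult om a u) k = 0" by simp
    qed
  qed
  then show ?thesis using ideal u_def by simp
qed

lemma nec:
  fixes om :: "'i \<Rightarrow> 'i \<Rightarrow> 'k::field" and M :: "('i \<Rightarrow> 'k) set"
  assumes nonzero: "M \<noteq> {0}"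
    and proper: "M \<noteq> evo_carrier"
    and mi: "modular_ideal om M"
  shows "\<exists>L0. L0 \<noteq> {} \<and> L0 \<noteq> UNIV \<and> M = lin_basis L0
              \<and> finite (UNIV - L0) \<and> UNIV - L0 \<subseteq> UNIV - Desc_set om L0
              \<and> (\<forall>i\<in>UNIV - L0. i \<in> Desc om i \<and> Desc om i - {i} \<subseteq> L0)"
proof -
  have id: "evo_ideal om M" and "\<exists>u. modular_unit om M u" using mi by (auto simp: modular_ideal_def)
  then obtain u where u: "modular_unit om M u" by blast
  have sub: "M \<subseteq> evo_carrier" and z: "0 \<in> M" and add: "\<And>x y. x \<in> M \<Longrightarrow> y \<in> M \<Longrightarrow> x + y \<in> M"
    and sm: "\<And>c x. x \<in> M \<Longrightarrow> smul c x \<in> M"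
    and ml: "\<And>a m. a \<in> evo_carrier \<Longrightarrow> m \<in> M \<Longrightarrow> evo_mult om a m \<in> M"
    using id unfolding evo_ideal_def by auto
  have uc: "u \<in> evo_carrier" and uu: "\<And>a. a \<in> evo_carrier \<Longrightarrow> a - evo_mult om a u \<in> M"
    using u unfolding modular_unit_def by auto
  have bc: "basis_vec j \<in> evo_carrier" for j :: 'i
    unfolding evo_carrier_def basis_vec_def by simp
  have v: "basis_vec j - (\<lambda>k. u j * om k j) \<in> M" for j
    using uu[OF bc[of j]] by (simp add: evo_mult_basis_left)
  have key: "basis_vec j \<in> M" if m: "m \<in> M" "m j \<noteq> 0" for m j
  proof -
    have "(\<lambda>k. m j * om k j) \<in> M" using ml[OF bc m(1)] by (simp add: evo_mult_basis_left)
    then have "smul (1 / m j) (\<lambda>k. m j * om k j) \<in> M" by (rule sm)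
    then have col: "(\<lambda>k. om k j) \<in> M" using m(2) by (simp add: smul_def)
    have "(basis_vec j - (\<lambda>k. u j * om k j)) + smul (u j) (\<lambda>k. om k j) \<in> M"
      by (rule add[OF v sm[OF col]])
    moreover have "(basis_vec j - (\<lambda>k. u j * om k j)) + smul (u j) (\<lambda>k. om k j) = basis_vec j"
      by (simp add: smul_def fun_eq_iff)
    ultimately show ?thesis by simp
  qed
  define L0 where "L0 = {j. basis_vec j \<in> M}"
  have sumM: "(\<Sum>j\<in>F. smul (c j) (basis_vec j)) \<in> M" if "finite F" "F \<subseteq> L0" for F c
    using that
  proof (induction F rule: finite_induct)
    case empty then show ?case using z by (simp add: zero_fun_def)
  next
    case (insert x F)
    have a: "smul (c x) (basis_vec x) \<in> M" using sm insert(4) L0_def by blast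
    have b: "(\<Sum>j\<in>F. smul (c j) (basis_vec j)) \<in> M" using insert by blast
    show ?case unfolding sum.insert[OF insert(1,2)] by (rule add[OF a b])
  qed
  have MLB: "M = lin_basis L0"
  proof
    show "M \<subseteq> lin_basis L0"
    proof
      fix m assume m: "m \<in> M"
      have "m i = 0" if "i \<notin> L0" for i
      proof (rule ccontr)
        assume "m i \<noteq> 0"
        then have "basis_vec i \<in> M" by (rule key[OF m])
        then show False using that L0_def by simp
      qed
      then show "m \<in> lin_basis L0" unfolding LB_mem
        using m sub by blast
    qed
    show "lin_basis L0 \<subseteq> M" unfolding lin_basis_def using sumM by blast
  qed
  have ne: "L0 \<noteq> {}"
  proof
    assume "L0 = {}"
    then have "M \<subseteq> {0}" using MLB by (auto simp: LB_mem fun_eq_iff)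
    then show False using nonzero z by blast
  qed
  have nu: "L0 \<noteq> UNIV"
  proof
    assume "L0 = UNIV"
    then have "M = evo_carrier" using MLB by (auto simp: LB_mem)
    then show False using proper by blast
  qed
  have Mz: "x i = 0" if "x \<in> M" "i \<notin> L0" for x i
  proof -
    have "x \<in> lin_basis L0" using that(1) MLB by simp
    then show ?thesis by (simp add: LB_mem that(2))
  qed
  have unz: "u i \<noteq> 0" if "i \<notin> L0" for i
  proof
    assume "u i = 0"
    then have "basis_vec i - (\<lambda>k. u i * om k i) = basis_vec i" by (simp add: fun_eq_iff)
    then have "basis_vec i \<in> M" using v[of i] by simp
    then show False using that L0_def by blast
  qed
  have fin: "finite (UNIV - L0)"
    using uc unz unfolding evo_carrier_def by (auto intro: finite_subset[of _ "{i. u i \<noteq> 0}"])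
  have L0cl: "\<forall>j\<in>L0. D1 om j \<subseteq> L0"
  proof (intro ballI subsetI)
    fix j x assume j: "j \<in> L0" and x: "x \<in> D1 om j"
    have "evo_mult om (basis_vec j) (basis_vec j) \<in> M" using ml[OF bc] j L0_def by blast
    then have "(\<lambda>k. om k j) \<in> M" by (simp only: evo_mult_basis_left) (simp add: basis_vec_def)
    then have "om x j = 0" if "x \<notin> L0" using Mz[of "\<lambda>k. om k j" x] that by simp
    then show "x \<in> L0" using x unfolding D1_def by blast
  qed
  have C1: "UNIV - L0 \<subseteq> UNIV - Desc_set om L0"
  proof
    fix i assume i: "i \<in> UNIV - L0"
    have "Desc om j \<subseteq> L0" if "j \<in> L0" for j
      using Desc_sub[of om j L0] L0cl that by blast
    then have "Desc_set om L0 \<subseteq> L0" unfolding Desc_set_def by blast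
    then show "i \<in> UNIV - Desc_set om L0" using i by blast
  qed
  have C2: "i \<in> Desc om i \<and> Desc om i - {i} \<subseteq> L0" if i: "i \<in> UNIV - L0" for i
  proof -
    have vi: "(basis_vec i - (\<lambda>k. u i * om k i)) k = 0" if "k \<notin> L0" for k
      using Mz[OF v that] .
    have "1 - u i * om i i = 0" using vi[of i] i by (simp add: basis_vec_def)
    then have "om i i \<noteq> 0" by auto
    then have "i \<in> D1 om i" by (simp add: D1_def)
    then have d: "i \<in> Desc om i" using D1_Desc[of om i] by blast
    have "D1 om i \<subseteq> insert i L0"
    proof
      fix k assume k: "k \<in> D1 om i"
      show "k \<in> insert i L0"
      proof (rule ccontr)
        assume "k \<notin> insert i L0"
        then have "k \<noteq> i" "k \<notin> L0" by auto
        then have "u i * om k i = 0" using vi[of k] by (simp add: basis_vec_def)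
        then show False using k unz[of i] i by (simp add: D1_def)
      qed
    qed
    moreover have "\<forall>j\<in>insert i L0. D1 om j \<subseteq> insert i L0"
      using calculation L0cl by blast
    ultimately have "Desc om i \<subseteq> insert i L0" by (rule Desc_sub)
    then show ?thesis using d by blast
  qed
  show ?thesis using ne nu MLB fin C1 C2 by blast
qed

theorem corollary3p7:
  fixes om :: "'i \<Rightarrow> 'i \<Rightarrow> 'k::real_normed_field"
    and M :: "('i \<Rightarrow> 'k) set"
  assumes evo: "\<forall>i. finite {k. om k i \<noteq> 0}"
    and sub: "M \<subseteq> evo_carrier"
    and nonzero: "M \<noteq> {0}"
    and proper: "M \<noteq> evo_carrier"
  shows "(modular_ideal om M \<longleftrightarrow>
           (\<exists>L0. L0 \<noteq> {} \<and> L0 \<noteq> UNIV \<and> M = lin_basis L0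
              \<and> finite (UNIV - L0) \<and> UNIV - L0 \<subseteq> UNIV - Desc_set om L0
              \<and> (\<forall>i\<in>UNIV - L0. i \<in> Desc om i \<and> Desc om i - {i} \<subseteq> L0)))
       \<and> (\<forall>L0. L0 \<noteq> {} \<and> L0 \<noteq> UNIV \<and> M = lin_basis L0
              \<and> finite (UNIV - L0) \<and> UNIV - L0 \<subseteq> UNIV - Desc_set om L0
              \<and> (\<forall>i\<in>UNIV - L0. i \<in> Desc om i \<and> Desc om i - {i} \<subseteq> L0)
            \<longrightarrow> modular_unit om M (\<Sum>i\<in>UNIV - L0. smul (1 / om i i) (basis_vec i)))"
proof (intro conjI allI impI iffI)
  assume "modular_ideal om M"
  then show "\<exists>L0. L0 \<noteq> {} \<and> L0 \<noteq> UNIV \<and> M = lin_basis L0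
              \<and> finite (UNIV - L0) \<and> UNIV - L0 \<subseteq> UNIV - Desc_set om L0
              \<and> (\<forall>i\<in>UNIV - L0. i \<in> Desc om i \<and> Desc om i - {i} \<subseteq> L0)"
    using nec[OF nonzero proper] by blast
next
  assume "\<exists>L0. L0 \<noteq> {} \<and> L0 \<noteq> UNIV \<and> M = lin_basis L0
              \<and> finite (UNIV - L0) \<and> UNIV - L0 \<subseteq> UNIV - Desc_set om L0
              \<and> (\<forall>i\<in>UNIV - L0. i \<in> Desc om i \<and> Desc om i - {i} \<subseteq> L0)"
  then obtain L0 where "M = lin_basis L0" "finite (UNIV - L0)" "UNIV - L0 \<subseteq> UNIV - Desc_set om L0"
     "\<forall>i\<in>UNIV - L0. i \<in> Desc om i \<and> Desc om i - {i} \<subseteq> L0" by blast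
  then show "modular_ideal om M" using suff[OF evo, of L0] unfolding modular_ideal_def by blast
next
  fix L0 assume h: "L0 \<noteq> {} \<and> L0 \<noteq> UNIV \<and> M = lin_basis L0
              \<and> finite (UNIV - L0) \<and> UNIV - L0 \<subseteq> UNIV - Desc_set om L0
              \<and> (\<forall>i\<in>UNIV - L0. i \<in> Desc om i \<and> Desc om i - {i} \<subseteq> L0)"
  then show "modular_unit om M (\<Sum>i\<in>UNIV - L0. smul (1 / om i i) (basis_vec i))"
    using suff[OF evo, of L0] by simp
qed

end
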